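(* Let $n\ge 2$ and let $\mu$ be a weight of the irreducible highest weight module $V(\Lambda_n)$ of the simple Lie algebra of type $C_n$. Suppose that every element $v\in B(\Lambda_n)$ with $\mathrm{wt}(v)=\mu$ has exactly $m<n$ single entries. Then $n-m=2k$ is even and $$\dim V(\Lambda_n)_\mu=\frac{1}{k+1}\binom{2k}{k}.$$
   Context: Let $\epsilon_1,\dots,\epsilon_n$ be the standard orthonormal basis of the dual of the Cartan subalgebra of $C_n$, with simple roots $\alpha_i=\epsilon_i-\epsilon_{i+1}$ ($1\le i\le n-1$), $\alpha_n=2\epsilon_n$, and fundamental weights $\Lambda_1,\dots,\Lambda_n$. Let $S=\{1,\dots,n,\bar n,\dots,\bar 1\}$ with total order $1\prec 2\prec\cdots\prec n\prec\bar n\prec\cdots\prec\bar 1$. The crystal $B(\Lambda_n)$ (Kashiwara–Nakashima) is the set of $n$-tuples $(i_1,\dots,i_n)$ of elements of $S$ with $i_1\prec i_2\prec\cdots\prec i_n$ such that whenever $i_k=p$ and $i_l=\bar p$ one has $k+(n-l+1)\le p$. Set $\mathrm{wt}(i)=\epsilon_i$, $\mathrm{wt}(\bar i)=-\epsilon_i$ and $\mathrm{wt}(i_1,\dots,i_n)=\sum_j\mathrm{wt}(i_j)$; then $\dim V(\Lambda_n)_\mu$ equals the number of elements of $B(\Lambda_n)$ of weight $\mu$. For $v=(i_1,\dots,i_n)\in B(\Lambda_n)$, an entry $i_k=p$ (resp. $i_k=\bar p$) is called a pair if $\bar p$ (resp. $p$) also occurs among the entries of $v$, and a single otherwise. *)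

theory Defs
  imports Complex_Main
begin

text \<open>Elements of S = {1,...,n, n-bar,...,1-bar} are encoded as nonzero integers:
  p (1 \<le> p \<le> n) is encoded as the integer p, and p-bar as the integer -p.\<close>

definition S_C :: "nat \<Rightarrow> int set" where
  "S_C n = {1..int n} \<union> {-int n..-1}"

text \<open>Position of an element in the total order 1 < 2 < ... < n < n-bar < ... < 1-bar.\<close>
definition rk :: "nat \<Rightarrow> int \<Rightarrow> int" where
  "rk n x = (if x > 0 then x else 2 * int n + 1 + x)"

text \<open>Kashiwara--Nakashima crystal B(Lambda_n) of type C_n: n-tuples (lists, 0-based indices)
  strictly increasing in the order above, such that whenever entry k (1-based) is p and entry l
  (1-based) is p-bar, k + (n - l + 1) \<le> p.\<close>
definition B_Lambda :: "nat \<Rightarrow> int list set" where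
  "B_Lambda n = {v. length v = n \<and> set v \<subseteq> S_C n \<and>
      sorted_wrt (\<lambda>a b. rk n a < rk n b) v \<and>
      (\<forall>k<n. \<forall>l<n. \<forall>p. v ! k = p \<and> v ! l = -p \<and> p > 0 \<longrightarrow>
          int (k + 1) + (int n - int (l + 1) + 1) \<le> p)}"

text \<open>Weight of v, given by its coordinates w.r.t. epsilon_1,...,epsilon_n
  (coordinate i; coordinates outside 1..n are 0).\<close>
definition wt :: "int list \<Rightarrow> nat \<Rightarrow> int" where
  "wt v i = int (length (filter (\<lambda>x. x = int i) v)) - int (length (filter (\<lambda>x. x = - int i) v))"

text \<open>Dimension of the weight space V(Lambda_n)_mu = number of crystal elements of weight mu.\<close>
definition wdim :: "nat \<Rightarrow> (nat \<Rightarrow> int) \<Rightarrow> nat" where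
  "wdim n \<mu> = card {v \<in> B_Lambda n. wt v = \<mu>}"

definition num_singles :: "int list \<Rightarrow> nat" where
  "num_singles v = card {k. k < length v \<and> - (v ! k) \<notin> set v}"

end

theory Submission
  imports Defs
begin


datatype cd = Sg | Pr | Ab

definition cnt :: "cd list \<Rightarrow> cd \<Rightarrow> nat" where
  "cnt w c = length (filter (\<lambda>x. x = c) w)"

fun okl :: "cd list \<Rightarrow> bool" where
  "okl [] = True"
| "okl (x # xs) = (okl xs \<and> (x = Pr \<longrightarrow> cnt (x # xs) Pr \<le> cnt (x # xs) Ab))"

definition W :: "bool list \<Rightarrow> nat \<Rightarrow> nat \<Rightarrow> cd list set" where
  "W s a b = {w. length w = length s \<and> (\<forall>i<length s. (w ! i = Sg) = s ! i)
      \<and> cnt w Pr = a \<and> cnt w Ab = b \<and> okl w}"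

lemma W_Nil: "W [] a b = (if a = 0 \<and> b = 0 then {[]} else {})"
  by (auto simp: W_def cnt_def)

lemma W_True: "W (True # s) a b = Cons Sg ` W s a b"
proof
  show "W (True # s) a b \<subseteq> Cons Sg ` W s a b"
  proof
    fix w assume w: "w \<in> W (True # s) a b"
    then obtain x xs where wx: "w = x # xs" by (cases w) (auto simp: W_def)
    have "x = Sg" using w wx by (auto simp: W_def dest: spec[of _ 0])
    moreover have "xs \<in> W s a b" using w wx \<open>x = Sg\<close>
      by (auto simp: W_def cnt_def dest: spec[of _ "Suc _"])
    ultimately show "w \<in> Cons Sg ` W s a b" using wx by blast
  qed
next
  show "Cons Sg ` W s a b \<subseteq> W (True # s) a b" by (auto simp: W_def cnt_def nth_Cons split: nat.splits)
qed

lemma W_False: "W (False # s) a b =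
   (if 1 \<le> a \<and> a \<le> b then Cons Pr ` W s (a - 1) b else {}) \<union>
   (if 1 \<le> b then Cons Ab ` W s a (b - 1) else {})"
proof
  show "W (False # s) a b \<subseteq> (if 1 \<le> a \<and> a \<le> b then Cons Pr ` W s (a - 1) b else {}) \<union>
   (if 1 \<le> b then Cons Ab ` W s a (b - 1) else {})"
  proof
    fix w assume w: "w \<in> W (False # s) a b"
    then obtain x xs where wx: "w = x # xs" by (cases w) (auto simp: W_def)
    have "x \<noteq> Sg" using w wx by (auto simp: W_def dest: spec[of _ 0])
    have xs: "length xs = length s \<and> (\<forall>i<length s. (xs ! i = Sg) = s ! i) \<and> okl xs"
      using w wx by (auto simp: W_def dest: spec[of _ "Suc _"])
    show "w \<in> (if 1 \<le> a \<and> a \<le> b then Cons Pr ` W s (a - 1) b else {}) \<union>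
   (if 1 \<le> b then Cons Ab ` W s a (b - 1) else {})"
    proof (cases x)
      case Pr
      then have "xs \<in> W s (a - 1) b" "1 \<le> a \<and> a \<le> b" using w wx xs by (auto simp: W_def cnt_def)
      then show ?thesis using wx Pr by auto
    next
      case Ab
      then have "xs \<in> W s a (b - 1)" "1 \<le> b" using w wx xs by (auto simp: W_def cnt_def)
      then show ?thesis using wx Ab by auto
    qed (use \<open>x \<noteq> Sg\<close> in auto)
  qed
next
  show "(if 1 \<le> a \<and> a \<le> b then Cons Pr ` W s (a - 1) b else {}) \<union>
   (if 1 \<le> b then Cons Ab ` W s a (b - 1) else {}) \<subseteq> W (False # s) a b"
    by (auto simp: W_def cnt_def nth_Cons split: nat.splits)
qed

lemma W_finite: "finite (W s a b)"
proof (induction s arbitrary: a b)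
  case Nil then show ?case by (simp add: W_Nil)
next
  case (Cons x s) then show ?case by (cases x) (auto simp: W_True W_False)
qed

lemma W_empty: "a > b \<Longrightarrow> W s a b = {}"
proof (induction s arbitrary: a b)
  case Nil then show ?case by (simp add: W_Nil)
next
  case (Cons x s) then show ?case by (cases x) (auto simp: W_True W_False)
qed

definition cat :: "nat \<Rightarrow> nat \<Rightarrow> int" where
  "cat a b = int ((a + b) choose a) - (if a = 0 then 0 else int ((a + b) choose (a - 1)))"

lemma cat_rec:
  assumes "1 \<le> a" "a \<le> b"
  shows "cat a b = cat (a - 1) b + (if a \<le> b - 1 then cat a (b - 1) else 0)"
proof -
  obtain a' where a: "a = Suc a'" using assms by (cases a) auto
  obtain N where N: "a + b = Suc N" using assms by (cases "a+b") auto
  have ab1: "a - 1 + b = N" "a + (b - 1) = N" using N assms by auto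
  have e1: "cat a b = int (Suc N choose Suc a') - int (Suc N choose a')"
    unfolding cat_def using N a by simp
  have e2: "cat (a - 1) b = int (N choose a') - (if a' = 0 then 0 else int (N choose (a' - 1)))"
    unfolding cat_def using ab1 a by simp
  have e3: "cat a (b - 1) = int (N choose Suc a') - int (N choose a')"
    unfolding cat_def using ab1 a by simp
  have p1: "Suc N choose Suc a' = (N choose a') + (N choose Suc a')"
    by (rule binomial_Suc_Suc)
  have p2: "Suc N choose a' = (if a' = 0 then 1 else (N choose (a' - 1)) + (N choose a'))"
    by (cases a') simp_all
  show ?thesis
  proof (cases "a \<le> b - 1")
    case True
    then show ?thesis using e1 e2 e3 p1 p2 by (cases "a' = 0") simp_all
  next
    case False
    then have "a = b" using assms by auto
    then have "N = Suc (a' + a')" using N a by simp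
    then have sym: "(N choose Suc a') = (N choose a')"
      using binomial_symmetric[of a' N] by simp
    show ?thesis using False e1 e2 p1 p2 sym by (cases "a' = 0") simp_all
  qed
qed

lemma W_card:
  "a \<le> b \<Longrightarrow> length s = a + b + length (filter (\<lambda>x. x) s) \<Longrightarrow> int (card (W s a b)) = cat a b"
proof (induction s arbitrary: a b)
  case Nil then show ?case by (simp add: W_Nil cat_def)
next
  case (Cons x s)
  show ?case
  proof (cases x)
    case True
    then show ?thesis using Cons by (simp add: W_True card_image)
  next
    case False
    have disj: "Cons Pr ` A \<inter> Cons Ab ` B = {}" for A B by auto
    have len: "length s + 1 = a + b + length (filter (\<lambda>x. x) s)" using Cons.prems False by simp
    show ?thesis
    proof (cases "a = 0")
      case True
      have "length (filter (\<lambda>x. x) s) \<le> length s" by (rule length_filter_le)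
      then have "1 \<le> b" using len True by linarith
      then show ?thesis using True False Cons.IH[of 0 "b - 1"] len
        by (simp add: W_False card_image cat_def)
    next
      case a0: False
      then have b1: "1 \<le> a" "1 \<le> b" using Cons.prems by auto
      have c1: "int (card (W s (a - 1) b)) = cat (a - 1) b"
        using Cons.IH[of "a - 1" b] len b1 Cons.prems by simp
      have c2: "int (card (W s a (b - 1))) = (if a \<le> b - 1 then cat a (b - 1) else 0)"
        using Cons.IH[of a "b - 1"] len b1 Cons.prems W_empty[of "b - 1" a s] by auto
      have "card (W (x # s) a b) = card (W s (a - 1) b) + card (W s a (b - 1))"
        using False b1 Cons.prems
        by (simp add: W_False card_Un_disjoint disj W_finite card_image)
      then show ?thesis using c1 c2 cat_rec[OF b1(1) Cons.prems(1)] by simp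
    qed
  qed
qed

lemma cat_diag: "cat k k * (int k + 1) = int ((2 * k) choose k)"
proof (cases k)
  case 0 then show ?thesis by (simp add: cat_def)
next
  case (Suc j)
  have h: "(Suc k) * ((2 * k) choose j) = k * ((2*k) choose k)"
    using Suc by (metis Suc_times_binomial_add add_Suc mult_2)
  have e: "cat k k = int ((2 * k) choose k) - int ((2 * k) choose j)"
    unfolding cat_def using Suc by (simp add: mult_2)
  have h': "(int k + 1) * int ((2 * k) choose j) = int k * int ((2*k) choose k)"
    using arg_cong[OF h, of int] by (simp add: algebra_simps)
  have "cat k k * (int k + 1) = int ((2 * k) choose k) * (int k + 1) - (int k + 1) * int ((2 * k) choose j)"
    unfolding e by (simp add: algebra_simps)
  also have "\<dots> = int ((2 * k) choose k)"
    unfolding h' by (simp add: algebra_simps)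
  finally show ?thesis .
qed


definition cde :: "int set \<Rightarrow> nat \<Rightarrow> cd" where
  "cde X i = (if int i \<in> X then (if - int i \<in> X then Pr else Sg) else (if - int i \<in> X then Sg else Ab))"

definition enc :: "nat \<Rightarrow> int set \<Rightarrow> cd list" where
  "enc n X = map (cde X) (rev [1..<Suc n])"

definition wX :: "int set \<Rightarrow> nat \<Rightarrow> int" where
  "wX X i = (if int i \<in> X then 1 else 0) - (if - int i \<in> X then 1 else 0)"

definition Cond :: "nat \<Rightarrow> int set \<Rightarrow> bool" where
  "Cond n X = (\<forall>p. 1 \<le> p \<and> p \<le> n \<and> int p \<in> X \<and> - int p \<in> X \<longrightarrow>
      card {x\<in>X. 0 < x \<and> x \<le> int p} + card {x\<in>X. - int p \<le> x \<and> x < 0} \<le> p)"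

definition cP :: "int set \<Rightarrow> nat \<Rightarrow> cd \<Rightarrow> nat" where
  "cP X p c = card {i\<in>{1..p}. cde X i = c}"

lemma cardS: "card {i\<in>{1..Suc p}. Q i} = card {i\<in>{1..p}. Q i} + (if Q (Suc p) then 1 else 0)"
proof -
  have "{i\<in>{1..Suc p}. Q i} = {i\<in>{1..p}. Q i} \<union> (if Q (Suc p) then {Suc p} else {})"
    by (auto simp: le_Suc_eq)
  then show ?thesis by (simp add: card_Un_disjoint)
qed

lemma cardPos: "card {x\<in>X. 0 < x \<and> x \<le> int (Suc p)} = card {x\<in>X. 0 < x \<and> x \<le> int p}
   + (if int (Suc p) \<in> X then 1 else 0)"
proof -
  have le1: "(x \<le> 1 + int p) = (x \<le> int p \<or> x = 1 + int p)" for x :: int by arith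
  have "{x\<in>X. 0 < x \<and> x \<le> int (Suc p)} = {x\<in>X. 0 < x \<and> x \<le> int p}
     \<union> (if int (Suc p) \<in> X then {int (Suc p)} else {})"
    using le1 by auto
  moreover have "finite {x\<in>X. 0 < x \<and> x \<le> int p}"
    by (rule finite_subset[of _ "{1..int p}"]) auto
  ultimately show ?thesis by (simp add: card_Un_disjoint)
qed

lemma cardNeg: "card {x\<in>X. - int (Suc p) \<le> x \<and> x < 0} = card {x\<in>X. - int p \<le> x \<and> x < 0}
   + (if - int (Suc p) \<in> X then 1 else 0)"
proof -
  have le1: "(-1 - int p \<le> x) = (- int p \<le> x \<or> x = -1 - int p)" for x :: int by arith
  have "{x\<in>X. - int (Suc p) \<le> x \<and> x < 0} = {x\<in>X. - int p \<le> x \<and> x < 0}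
     \<union> (if - int (Suc p) \<in> X then {- int (Suc p)} else {})"
    using le1 by auto
  moreover have "finite {x\<in>X. - int p \<le> x \<and> x < 0}"
    by (rule finite_subset[of _ "{- int p..-1}"]) auto
  ultimately show ?thesis by (simp add: card_Un_disjoint)
qed

lemma core:
  "card {x\<in>X. 0 < x \<and> x \<le> int p} + card {x\<in>X. - int p \<le> x \<and> x < 0}
     = 2 * cP X p Pr + cP X p Sg \<and> p = cP X p Pr + cP X p Sg + cP X p Ab"
proof (induction p)
  case 0
  have "{x\<in>X. 0 < x \<and> x \<le> 0} = {}" "{x\<in>X. 0 \<le> x \<and> x < 0} = {}" by auto
  then show ?case by (simp add: cP_def)
next
  case (Suc p)
  then show ?case unfolding cP_def cardS cardPos cardNeg by (simp add: cde_def)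
qed

lemma card_X:
  assumes "X \<subseteq> S_C n"
  shows "card X = 2 * cP X n Pr + cP X n Sg"
proof -
  have "X = {x\<in>X. 0 < x \<and> x \<le> int n} \<union> {x\<in>X. - int n \<le> x \<and> x < 0}"
    using assms by (auto simp: S_C_def)
  moreover have "finite {x\<in>X. 0 < x \<and> x \<le> int n}"
    by (rule finite_subset[of _ "{1..int n}"]) auto
  moreover have "finite {x\<in>X. - int n \<le> x \<and> x < 0}"
    by (rule finite_subset[of _ "{- int n..-1}"]) auto
  ultimately have "card X = card {x\<in>X. 0 < x \<and> x \<le> int n} + card {x\<in>X. - int n \<le> x \<and> x < 0}"
    by (metis (no_types, lifting) card_Un_disjoint disjoint_iff mem_Collect_eq not_less_iff_gr_or_eq)
  then show ?thesis using core[of X n] by simp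
qed

lemma cnt_map: "cnt (map (cde X) (rev [1..<Suc p])) c = cP X p c"
proof -
  have "cnt (map (cde X) (rev [1..<Suc p])) c = length (filter (\<lambda>i. cde X i = c) [1..<Suc p])"
    unfolding cnt_def by (simp add: filter_map rev_filter[symmetric] o_def del: upt_Suc)
  also have "\<dots> = card {i\<in>{1..p}. cde X i = c}"
    by (simp only: distinct_length_filter[OF distinct_upt] set_upt) (rule arg_cong[where f=card], auto)
  finally show ?thesis unfolding cP_def .
qed

lemma okl_iff: "okl w \<longleftrightarrow> (\<forall>j<length w. w ! j = Pr \<longrightarrow> cnt (drop j w) Pr \<le> cnt (drop j w) Ab)"
proof (induction w)
  case Nil then show ?case by simp
next
  case (Cons x w)
  show ?case
  proof
    assume "okl (x # w)"
    then show "\<forall>j<length (x # w). (x # w) ! j = Pr \<longrightarrow> cnt (drop j (x # w)) Pr \<le> cnt (drop j (x # w)) Ab"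
      using Cons.IH by (auto simp: nth_Cons split: nat.splits)
  next
    assume h: "\<forall>j<length (x # w). (x # w) ! j = Pr \<longrightarrow> cnt (drop j (x # w)) Pr \<le> cnt (drop j (x # w)) Ab"
    have "okl w" using Cons.IH h by (auto dest: spec[of _ "Suc _"])
    moreover have "x = Pr \<longrightarrow> cnt (x # w) Pr \<le> cnt (x # w) Ab" using h by (auto dest: spec[of _ 0])
    ultimately show "okl (x # w)" by simp
  qed
qed

lemma enc_nth: "j < n \<Longrightarrow> enc n X ! j = cde X (n - j)"
  by (simp add: enc_def rev_nth Suc_diff_Suc del: upt_Suc)

lemma enc_drop: "j \<le> n \<Longrightarrow> drop j (enc n X) = map (cde X) (rev [1..<Suc (n - j)])"
  by (simp add: enc_def drop_map drop_rev del: upt_Suc)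

lemma okl_Cond: "okl (enc n X) \<longleftrightarrow> Cond n X"
proof -
  have "okl (enc n X) \<longleftrightarrow> (\<forall>j<n. cde X (n - j) = Pr \<longrightarrow> cP X (n - j) Pr \<le> cP X (n - j) Ab)"
    proof -
    have len: "length (enc n X) = n" by (simp add: enc_def)
    have d: "\<And>j c. j < n \<Longrightarrow> cnt (drop j (enc n X)) c = cP X (n - j) c"
      using enc_drop cnt_map by simp
    show ?thesis unfolding okl_iff by (simp add: len enc_nth d)
  qed
  also have "\<dots> \<longleftrightarrow> (\<forall>p. 1 \<le> p \<and> p \<le> n \<longrightarrow> cde X p = Pr \<longrightarrow> cP X p Pr \<le> cP X p Ab)"
  proof
    assume h: "\<forall>j<n. cde X (n - j) = Pr \<longrightarrow> cP X (n - j) Pr \<le> cP X (n - j) Ab"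
    show "\<forall>p. 1 \<le> p \<and> p \<le> n \<longrightarrow> cde X p = Pr \<longrightarrow> cP X p Pr \<le> cP X p Ab"
    proof (intro allI impI)
      fix p assume "1 \<le> p \<and> p \<le> n" "cde X p = Pr"
      then show "cP X p Pr \<le> cP X p Ab" using h[rule_format, of "n - p"] by auto
    qed
  next
    assume h: "\<forall>p. 1 \<le> p \<and> p \<le> n \<longrightarrow> cde X p = Pr \<longrightarrow> cP X p Pr \<le> cP X p Ab"
    then show "\<forall>j<n. cde X (n - j) = Pr \<longrightarrow> cP X (n - j) Pr \<le> cP X (n - j) Ab"
      by auto
  qed
  also have "\<dots> \<longleftrightarrow> Cond n X"
    unfolding Cond_def
  proof (intro iff_allI)
    fix p
    have "cde X p = Pr \<longleftrightarrow> int p \<in> X \<and> - int p \<in> X" by (simp add: cde_def)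
    then show "(1 \<le> p \<and> p \<le> n \<longrightarrow> cde X p = Pr \<longrightarrow> cP X p Pr \<le> cP X p Ab) \<longleftrightarrow>
      (1 \<le> p \<and> p \<le> n \<and> int p \<in> X \<and> - int p \<in> X \<longrightarrow>
      card {x\<in>X. 0 < x \<and> x \<le> int p} + card {x\<in>X. - int p \<le> x \<and> x < 0} \<le> p)"
      using core[of X p] by auto
  qed
  finally show ?thesis .
qed



definition SB :: "nat \<Rightarrow> int list \<Rightarrow> bool" where
  "SB n v = (length v = n \<and> set v \<subseteq> S_C n \<and> sorted_wrt (\<lambda>a b. rk n a < rk n b) v)"

lemma rk_inj: "inj_on (rk n) (S_C n)"
  by (auto simp: inj_on_def rk_def S_C_def split: if_splits)

lemma sorted_distinct: "sorted_wrt (\<lambda>a b. f a < (f b :: int)) v \<Longrightarrow> distinct v"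
proof -
  assume "sorted_wrt (\<lambda>a b. f a < (f b :: int)) v"
  then have "sorted_wrt (<) (map f v)" by (simp add: sorted_wrt_map)
  then have "distinct (map f v)" by (simp add: strict_sorted_iff)
  then show "distinct v" by (simp add: distinct_map)
qed

lemma len_filter_eq: "distinct v \<Longrightarrow> length (filter (\<lambda>x. x = a) v) = (if a \<in> set v then 1 else 0)"
  by (induction v) auto

lemma wt_wX: "distinct v \<Longrightarrow> wt v = wX (set v)"
  by (rule ext) (simp add: wt_def wX_def len_filter_eq)

lemma idx:
  assumes s: "sorted_wrt (\<lambda>a b. f a < (f b :: int)) v" and k: "k < length v"
  shows "card {x\<in>set v. f x < f (v ! k)} = k \<and> card {x\<in>set v. f (v ! k) < f x} = length v - Suc k"
proof -
  have d: "distinct v" using sorted_distinct[OF s] .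
  have "{x\<in>set v. f x < f (v ! k)} = set (take k v)"
  proof
    show "{x\<in>set v. f x < f (v ! k)} \<subseteq> set (take k v)"
    proof
      fix x assume "x \<in> {x\<in>set v. f x < f (v ! k)}"
      then obtain j where j: "j < length v" "v ! j = x" "f x < f (v ! k)" by (auto simp: in_set_conv_nth)
      have "j < k"
      proof (rule ccontr)
        assume "\<not> j < k"
        then have "k = j \<or> k < j" by auto
        then show False
        proof
          assume "k = j" then show False using j by simp
        next
          assume "k < j" then have "f (v ! k) < f (v ! j)" using sorted_wrt_nth_less[OF s _ j(1)] by simp
          then show False using j by simp
        qed
      qed
      then show "x \<in> set (take k v)" using j k by (auto simp: in_set_conv_nth)
    qed
  next
    show "set (take k v) \<subseteq> {x\<in>set v. f x < f (v ! k)}"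
    proof
      fix x assume "x \<in> set (take k v)"
      then obtain j where j: "j < k" "x = v ! j" using k by (auto simp: in_set_conv_nth)
      then show "x \<in> {x\<in>set v. f x < f (v ! k)}" using sorted_wrt_nth_less[OF s j(1) k] k by auto
    qed
  qed
  moreover have "{x\<in>set v. f (v ! k) < f x} = set (drop (Suc k) v)"
  proof
    show "{x\<in>set v. f (v ! k) < f x} \<subseteq> set (drop (Suc k) v)"
    proof
      fix x assume "x \<in> {x\<in>set v. f (v ! k) < f x}"
      then obtain j where j: "j < length v" "v ! j = x" "f (v ! k) < f x" by (auto simp: in_set_conv_nth)
      have "k < j"
      proof (rule ccontr)
        assume "\<not> k < j"
        then have "k = j \<or> j < k" by auto
        then show False
        proof
          assume "k = j" then show False using j by simp
        next
          assume "j < k" then have "f (v ! j) < f (v ! k)" using sorted_wrt_nth_less[OF s _ k] by simp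
          then show False using j by simp
        qed
      qed
      then show "x \<in> set (drop (Suc k) v)" using j k
        by (auto simp: in_set_conv_nth intro!: exI[of _ "j - Suc k"])
    qed
  next
    show "set (drop (Suc k) v) \<subseteq> {x\<in>set v. f (v ! k) < f x}"
    proof
      fix x assume "x \<in> set (drop (Suc k) v)"
      then obtain j where j: "j < length v - Suc k" "x = v ! (Suc k + j)" by (auto simp: in_set_conv_nth)
      then show "x \<in> {x\<in>set v. f (v ! k) < f x}" using sorted_wrt_nth_less[OF s, of k "Suc k + j"] by auto
    qed
  qed
  ultimately show ?thesis using d k by (simp add: distinct_card)
qed

lemma Bcond_iff:
  assumes "SB n v"
  shows "(\<forall>k<n. \<forall>l<n. \<forall>p. v ! k = p \<and> v ! l = - p \<and> p > 0 \<longrightarrow>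
          int (k + 1) + (int n - int (l + 1) + 1) \<le> p) \<longleftrightarrow> Cond n (set v)"
proof -
  let ?X = "set v"
  have len: "length v = n" and sub: "set v \<subseteq> S_C n" and s: "sorted_wrt (\<lambda>a b. rk n a < rk n b) v"
    using assms by (auto simp: SB_def)
  have fin: "finite {x\<in>?X. P x}" for P by simp
  have i1: "int k = int (card {x\<in>?X. 0 < x \<and> x < p})" if "k < n" "v ! k = p" "p > 0" for k p
  proof -
    have "p \<in> S_C n" using that sub len by (metis nth_mem subsetD)
    then have pn: "p \<le> int n" using that by (auto simp: S_C_def)
    have "{x\<in>?X. rk n x < rk n (v ! k)} = {x\<in>?X. 0 < x \<and> x < p}"
      using that pn sub by (auto simp: rk_def S_C_def)
    then show ?thesis using idx[OF s, of k] that len by simp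
  qed
  have i2: "int n - int (l + 1) = int (card {x\<in>?X. - p < x \<and> x < 0})" if "l < n" "v ! l = - p" "p > 0" for l p
  proof -
    have "- p \<in> S_C n" using that sub len by (metis nth_mem subsetD)
    then have pn: "p \<le> int n" using that by (auto simp: S_C_def)
    have "{x\<in>?X. rk n (v ! l) < rk n x} = {x\<in>?X. - p < x \<and> x < 0}"
      using that pn sub by (auto simp: rk_def S_C_def)
    then show ?thesis using idx[OF s, of l] that len by simp
  qed
  have c1: "card {x\<in>?X. 0 < x \<and> x \<le> p} = card {x\<in>?X. 0 < x \<and> x < p} + 1" if "p \<in> ?X" "p > 0" for p
  proof -
    have "{x\<in>?X. 0 < x \<and> x \<le> p} = insert p {x\<in>?X. 0 < x \<and> x < p}" using that by auto
    then show ?thesis by simp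
  qed
  have c2: "card {x\<in>?X. - p \<le> x \<and> x < 0} = card {x\<in>?X. - p < x \<and> x < 0} + 1" if "- p \<in> ?X" "p > 0" for p
  proof -
    have "{x\<in>?X. - p \<le> x \<and> x < 0} = insert (- p) {x\<in>?X. - p < x \<and> x < 0}" using that by auto
    then show ?thesis by simp
  qed
  show ?thesis
  proof
    assume h: "\<forall>k<n. \<forall>l<n. \<forall>p. v ! k = p \<and> v ! l = - p \<and> p > 0 \<longrightarrow>
          int (k + 1) + (int n - int (l + 1) + 1) \<le> p"
    show "Cond n ?X" unfolding Cond_def
    proof (intro allI impI)
      fix p :: nat assume p: "1 \<le> p \<and> p \<le> n \<and> int p \<in> ?X \<and> - int p \<in> ?X"
      then obtain k where k: "k < n" "v ! k = int p" using len by (auto simp: in_set_conv_nth)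
      obtain l where l: "l < n" "v ! l = - int p" using p len by (auto simp: in_set_conv_nth)
      have "int (k + 1) + (int n - int (l + 1) + 1) \<le> int p" using h k l p by auto
      then show "card {x\<in>?X. 0 < x \<and> x \<le> int p} + card {x\<in>?X. - int p \<le> x \<and> x < 0} \<le> p"
        using i1[OF k] i2[OF l] c1[of "int p"] c2[of "int p"] p by simp
    qed
  next
    assume h: "Cond n ?X"
    show "\<forall>k<n. \<forall>l<n. \<forall>p. v ! k = p \<and> v ! l = - p \<and> p > 0 \<longrightarrow>
          int (k + 1) + (int n - int (l + 1) + 1) \<le> p"
    proof (intro allI impI)
      fix k l p assume kl: "k < n" "l < n" and p: "v ! k = p \<and> v ! l = - p \<and> p > 0"
      have pX: "p \<in> ?X" "- p \<in> ?X" using kl p len by (metis nth_mem)+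
      then have pn: "p \<le> int n" using sub p by (auto simp: S_C_def)
      have "card {x\<in>?X. 0 < x \<and> x \<le> int (nat p)} + card {x\<in>?X. - int (nat p) \<le> x \<and> x < 0} \<le> nat p"
      proof -
        have "1 \<le> nat p \<and> nat p \<le> n \<and> int (nat p) \<in> ?X \<and> - int (nat p) \<in> ?X"
          using pX pn p by auto
        then show ?thesis using h unfolding Cond_def by blast
      qed
      then show "int (k + 1) + (int n - int (l + 1) + 1) \<le> p"
        using i1[of k p] i2[of l p] kl p c1[OF pX(1)] c2[OF pX(2)] by simp
    qed
  qed
qed

lemma B_eq: "B_Lambda n = {v. SB n v \<and> Cond n (set v)}"
  using Bcond_iff unfolding B_Lambda_def SB_def by blast

lemma SB_inj: "inj_on set {v. SB n v}"
proof (rule inj_onI)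
  fix v1 v2 assume v1: "v1 \<in> {v. SB n v}" and v2: "v2 \<in> {v. SB n v}" and e: "set v1 = set v2"
  have "sorted_wrt (<) (map (rk n) v1)" "sorted_wrt (<) (map (rk n) v2)"
    using v1 v2 by (auto simp: SB_def sorted_wrt_map)
  moreover have "set (map (rk n) v1) = set (map (rk n) v2)" using e by simp
  ultimately have "map (rk n) v1 = map (rk n) v2" using strict_sorted_equal by metis
  moreover have "inj_on (rk n) (set v1 \<union> set v2)"
    using v1 v2 rk_inj[of n] by (auto simp: SB_def intro: inj_on_subset)
  ultimately show "v1 = v2" using inj_on_map_eq_map by blast
qed

lemma SB_surj:
  assumes "X \<subseteq> S_C n" "card X = n"
  shows "\<exists>v. SB n v \<and> set v = X"
proof -
  interpret F: folding_insort_key "(\<le>) :: int \<Rightarrow> int \<Rightarrow> bool" "(<)" "S_C n" "rk n"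
    by unfold_locales (rule rk_inj)
  have "finite X" using assms(1) by (rule finite_subset) (simp add: S_C_def)
  then obtain l where l: "sorted_wrt (<) (map (rk n) l)" "set l = X" "length l = card X"
    using F.finite_set_strict_sorted[OF assms(1)] by blast
  then show ?thesis using assms by (auto simp: SB_def sorted_wrt_map)
qed



lemma cde_Sg: "cde X i = Sg \<longleftrightarrow> wX X i \<noteq> 0"
  by (simp add: cde_def wX_def)

lemma mem_pos: "int i \<in> X \<longleftrightarrow> cde X i = Pr \<or> (cde X i = Sg \<and> wX X i = 1)"
  by (simp add: cde_def wX_def)

lemma mem_neg: "- int i \<in> X \<longleftrightarrow> cde X i = Pr \<or> (cde X i = Sg \<and> wX X i = -1)"
  by (simp add: cde_def wX_def)

lemma cnt_sum: "length w = cnt w Sg + cnt w Pr + cnt w Ab"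
proof (induction w)
  case Nil then show ?case by (simp add: cnt_def)
next
  case (Cons x w) then show ?case by (cases x) (auto simp: cnt_def)
qed

lemma cnt_enc: "cnt (enc n X) c = cP X n c"
  unfolding enc_def by (rule cnt_map)

lemma SC_cases: "x \<in> S_C n \<Longrightarrow> \<exists>i. 1 \<le> i \<and> i \<le> n \<and> (x = int i \<or> x = - int i)"
proof (cases "x > 0")
  case True
  assume "x \<in> S_C n"
  then show ?thesis using True by (intro exI[of _ "nat x"]) (auto simp: S_C_def)
next
  case False
  assume "x \<in> S_C n"
  then show ?thesis using False by (intro exI[of _ "nat (- x)"]) (auto simp: S_C_def)
qed

lemma enc_inj:
  assumes "X1 \<subseteq> S_C n" "X2 \<subseteq> S_C n" "wX X1 = wX X2" "enc n X1 = enc n X2"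
  shows "X1 = X2"
proof -
  have c: "cde X1 i = cde X2 i" if "1 \<le> i" "i \<le> n" for i
    using arg_cong[OF assms(4), of "\<lambda>w. w ! (n - i)"] enc_nth[of "n - i" n] that by simp
  have m: "(int i \<in> X1 \<longleftrightarrow> int i \<in> X2) \<and> (- int i \<in> X1 \<longleftrightarrow> - int i \<in> X2)"
    if "1 \<le> i" "i \<le> n" for i
    using c[OF that] assms(3) mem_pos[of i X1] mem_pos[of i X2] mem_neg[of i X1] mem_neg[of i X2]
    by metis
  show ?thesis
  proof (rule set_eqI)
    fix x
    show "x \<in> X1 \<longleftrightarrow> x \<in> X2"
    proof
      assume "x \<in> X1"
      then obtain i where "1 \<le> i" "i \<le> n" "x = int i \<or> x = - int i" using assms(1) SC_cases by blast
      then show "x \<in> X2" using m \<open>x \<in> X1\<close> by blast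
    next
      assume "x \<in> X2"
      then obtain i where "1 \<le> i" "i \<le> n" "x = int i \<or> x = - int i" using assms(2) SC_cases by blast
      then show "x \<in> X1" using m \<open>x \<in> X2\<close> by blast
    qed
  qed
qed

lemma len_enc: "length (enc n X) = n" by (simp add: enc_def)

lemma s_nth: "j < n \<Longrightarrow> map f (rev [1..<Suc n]) ! j = f (n - j)"
  by (simp add: rev_nth Suc_diff_Suc del: upt_Suc)

lemma wX_out: "X \<subseteq> S_C n \<Longrightarrow> \<not> (1 \<le> i \<and> i \<le> n) \<Longrightarrow> wX X i = 0"
  unfolding wX_def S_C_def by auto

lemma enc_surj:
  assumes X0: "X0 \<subseteq> S_C n" and mu: "\<mu> = wX X0"
    and w: "w \<in> W (map (\<lambda>i. \<mu> i \<noteq> 0) (rev [1..<Suc n])) k k"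
  shows "\<exists>X. X \<subseteq> S_C n \<and> card X = n \<and> Cond n X \<and> wX X = \<mu> \<and> enc n X = w"
proof -
  let ?s = "map (\<lambda>i. \<mu> i \<noteq> 0) (rev [1..<Suc n])"
  define c where "c i = w ! (n - i)" for i
  have lw: "length w = n" using w by (simp add: W_def)
  have cSg: "c i = Sg \<longleftrightarrow> \<mu> i \<noteq> 0" if "1 \<le> i" "i \<le> n" for i
  proof -
    have "(w ! (n - i) = Sg) = ?s ! (n - i)" using w that by (simp add: W_def)
    then show ?thesis using s_nth[of "n - i" n "\<lambda>i. \<mu> i \<noteq> 0"] that by (simp add: c_def)
  qed
  have mu3: "\<mu> i = 0 \<or> \<mu> i = 1 \<or> \<mu> i = -1" for i unfolding mu wX_def by auto
  define X where "X = {x. \<exists>i. 1 \<le> i \<and> i \<le> n \<and>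
     ((x = int i \<and> (c i = Pr \<or> c i = Sg \<and> \<mu> i = 1)) \<or> (x = - int i \<and> (c i = Pr \<or> c i = Sg \<and> \<mu> i = -1)))}"
  have mp: "int i \<in> X \<longleftrightarrow> 1 \<le> i \<and> i \<le> n \<and> (c i = Pr \<or> c i = Sg \<and> \<mu> i = 1)" for i
    unfolding X_def by auto
  have mn: "- int i \<in> X \<longleftrightarrow> 1 \<le> i \<and> i \<le> n \<and> (c i = Pr \<or> c i = Sg \<and> \<mu> i = -1)" for i
    unfolding X_def by auto
  have sub: "X \<subseteq> S_C n" unfolding X_def S_C_def by auto
  have cde: "cde X i = c i" if "1 \<le> i" "i \<le> n" for i
    using cSg[OF that] mu3[of i] that unfolding cde_def mp mn by (cases "c i") auto
  have wx: "wX X = \<mu>"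
  proof
    fix i
    show "wX X i = \<mu> i"
    proof (cases "1 \<le> i \<and> i \<le> n")
      case True
      then show ?thesis using cSg[of i] mu3[of i] unfolding wX_def mp mn by (cases "c i") auto
    next
      case False
      then show ?thesis using wX_out[OF sub False] wX_out[OF X0 False] mu by simp
    qed
  qed
  have enc: "enc n X = w"
  proof (rule nth_equalityI)
    show "length (enc n X) = length w" using lw by (simp add: len_enc)
    fix j assume "j < length (enc n X)"
    then have j: "j < n" by (simp add: len_enc)
    then show "enc n X ! j = w ! j" using enc_nth[OF j] cde[of "n - j"] by (simp add: c_def)
  qed
  have cond: "Cond n X" using okl_Cond[of n X] enc w by (simp add: W_def)
  have "card X = 2 * cnt w Pr + cnt w Sg" using card_X[OF sub] cnt_enc[of n X] enc by simp
  moreover have "length w = cnt w Sg + cnt w Pr + cnt w Ab" by (rule cnt_sum)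
  moreover have "cnt w Pr = k" "cnt w Ab = k" using w by (auto simp: W_def)
  ultimately have "card X = n" using lw by simp
  then show ?thesis using sub cond wx enc by blast
qed

theorem mainTheorem1:
  fixes n m :: nat and \<mu> :: "nat \<Rightarrow> int"
  assumes "n \<ge> 2"
    and "\<exists>v \<in> B_Lambda n. wt v = \<mu>"
    and "m < n"
    and "\<forall>v \<in> B_Lambda n. wt v = \<mu> \<longrightarrow> num_singles v = m"
  shows "\<exists>k. n - m = 2 * k \<and> real (wdim n \<mu>) = 1 / real (k + 1) * real ((2 * k) choose k)"
proof -
  obtain v0 where v0: "v0 \<in> B_Lambda n" "wt v0 = \<mu>" using assms(2) by blast
  define X0 where "X0 = set v0"
  have SB0: "SB n v0" and C0: "Cond n X0" using v0 B_eq unfolding X0_def by auto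
  have d0: "distinct v0" using SB0 sorted_distinct unfolding SB_def by blast
  have mu: "\<mu> = wX X0" using wt_wX[OF d0] v0 unfolding X0_def by simp
  have X0sub: "X0 \<subseteq> S_C n" using SB0 unfolding SB_def X0_def by simp
  have cX0: "card X0 = n" using SB0 d0 unfolding SB_def X0_def by (simp add: distinct_card)
  define Fam where "Fam = {X. X \<subseteq> S_C n \<and> card X = n \<and> Cond n X \<and> wX X = \<mu>}"
  have X0F: "X0 \<in> Fam" using X0sub cX0 C0 mu unfolding Fam_def by simp
  have e1: "{v \<in> B_Lambda n. wt v = \<mu>} = {v. SB n v \<and> Cond n (set v) \<and> wX (set v) = \<mu>}"
  proof (rule Collect_cong)
    fix v
    have "SB n v \<Longrightarrow> wt v = wX (set v)" using wt_wX sorted_distinct unfolding SB_def by blast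
    then show "(v \<in> B_Lambda n \<and> wt v = \<mu>) \<longleftrightarrow> (SB n v \<and> Cond n (set v) \<and> wX (set v) = \<mu>)"
      using B_eq by auto
  qed
  have inj1: "inj_on set {v. SB n v \<and> Cond n (set v) \<and> wX (set v) = \<mu>}"
    by (rule inj_on_subset[OF SB_inj]) blast
  have img1: "set ` {v. SB n v \<and> Cond n (set v) \<and> wX (set v) = \<mu>} = Fam"
  proof
    show "set ` {v. SB n v \<and> Cond n (set v) \<and> wX (set v) = \<mu>} \<subseteq> Fam"
    proof
      fix X assume "X \<in> set ` {v. SB n v \<and> Cond n (set v) \<and> wX (set v) = \<mu>}"
      then obtain v where v: "SB n v" "Cond n (set v)" "wX (set v) = \<mu>" "X = set v" by blast
      have "distinct v" using v(1) sorted_distinct unfolding SB_def by blast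
      then have "card X = n" using v unfolding SB_def by (simp add: distinct_card)
      then show "X \<in> Fam" using v unfolding Fam_def SB_def by simp
    qed
  next
    show "Fam \<subseteq> set ` {v. SB n v \<and> Cond n (set v) \<and> wX (set v) = \<mu>}"
    proof
      fix X assume "X \<in> Fam"
      then have X: "X \<subseteq> S_C n" "card X = n" "Cond n X" "wX X = \<mu>" unfolding Fam_def by auto
      obtain v where "SB n v" "set v = X" using SB_surj[OF X(1,2)] by blast
      then show "X \<in> set ` {v. SB n v \<and> Cond n (set v) \<and> wX (set v) = \<mu>}" using X by blast
    qed
  qed
  have wd: "wdim n \<mu> = card Fam"
    unfolding wdim_def e1 using card_image[OF inj1] img1 by simp
  define s where "s = map (\<lambda>i. \<mu> i \<noteq> 0) (rev [1..<Suc n])"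
  define k where "k = cP X0 n Pr"
  have SgF: "cP X n Sg = cP X0 n Sg" if "X \<in> Fam" for X
    using that X0F unfolding Fam_def cP_def by (simp add: cde_Sg)
  have nX0: "n = 2 * k + cP X0 n Sg" using card_X[OF X0sub] cX0 unfolding k_def by simp
  have PA: "cP X n Pr = k \<and> cP X n Ab = k" if "X \<in> Fam" for X
  proof -
    have "n = 2 * cP X n Pr + cP X n Sg" using card_X[of X n] that unfolding Fam_def by simp
    moreover have "n = cP X n Pr + cP X n Sg + cP X n Ab" using core[of X n] by simp
    ultimately show ?thesis using SgF[OF that] nX0 by simp
  qed
  have encW: "enc n X \<in> W s k k" if "X \<in> Fam" for X
  proof -
    have X: "X \<subseteq> S_C n" "card X = n" "Cond n X" "wX X = \<mu>" using that unfolding Fam_def by auto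
    have "length (enc n X) = length s" by (simp add: len_enc s_def)
    moreover have "\<forall>i<length s. (enc n X ! i = Sg) = s ! i"
    proof (intro allI impI)
      fix i assume "i < length s"
      then have i: "i < n" by (simp add: s_def del: upt_Suc)
      show "(enc n X ! i = Sg) = s ! i" unfolding enc_nth[OF i] s_def s_nth[OF i] cde_Sg X(4) ..
    qed
    moreover have "cnt (enc n X) Pr = k" "cnt (enc n X) Ab = k" using PA[OF that] by (simp_all add: cnt_enc)
    moreover have "okl (enc n X)" using okl_Cond X(3) by simp
    ultimately show ?thesis unfolding W_def by simp
  qed
  have inj2: "inj_on (enc n) Fam"
    by (rule inj_onI) (rule enc_inj[of _ n], auto simp: Fam_def)
  have img2: "enc n ` Fam = W s k k"
  proof
    show "enc n ` Fam \<subseteq> W s k k" using encW by blast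
  next
    show "W s k k \<subseteq> enc n ` Fam"
    proof
      fix w assume "w \<in> W s k k"
      then obtain X where "X \<subseteq> S_C n \<and> card X = n \<and> Cond n X \<and> wX X = \<mu> \<and> enc n X = w"
        using enc_surj[OF X0sub mu] unfolding s_def by blast
      then show "w \<in> enc n ` Fam" unfolding Fam_def by blast
    qed
  qed
  have cardW: "card Fam = card (W s k k)" using card_image[OF inj2] img2 by simp
  have lfs: "length (filter (\<lambda>x. x) s) = cP X0 n Sg"
  proof -
    have "length (filter (\<lambda>x. x) s) = cnt (map (cde X0) (rev [1..<Suc n])) Sg"
      unfolding s_def cnt_def by (simp add: filter_map o_def cde_Sg mu del: upt_Suc)
    then show ?thesis using cnt_map by simp
  qed
  have ls: "length s = k + k + length (filter (\<lambda>x. x) s)" using nX0 lfs by (simp add: s_def)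
  have cW: "int (card (W s k k)) = cat k k" using W_card[OF le_refl ls] .
  have sing: "num_singles v0 = cP X0 n Sg"
  proof -
    have i1: "inj_on (nth v0) {j. j < length v0 \<and> - (v0 ! j) \<notin> set v0}"
      by (rule inj_on_nth[OF d0]) simp
    have im1: "nth v0 ` {j. j < length v0 \<and> - (v0 ! j) \<notin> set v0} = {x\<in>X0. - x \<notin> X0}"
      unfolding X0_def by (auto simp: in_set_conv_nth)
    define g where "g i = (if int i \<in> X0 then int i else - int i)" for i
    have i2: "inj_on g {i\<in>{1..n}. cde X0 i = Sg}"
      by (rule inj_onI) (auto simp: g_def split: if_splits)
    have im2: "g ` {i\<in>{1..n}. cde X0 i = Sg} = {x\<in>X0. - x \<notin> X0}"
    proof
      show "g ` {i\<in>{1..n}. cde X0 i = Sg} \<subseteq> {x\<in>X0. - x \<notin> X0}"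
        by (auto simp: g_def cde_def split: if_splits)
    next
      show "{x\<in>X0. - x \<notin> X0} \<subseteq> g ` {i\<in>{1..n}. cde X0 i = Sg}"
      proof
        fix x assume x: "x \<in> {x\<in>X0. - x \<notin> X0}"
        then obtain i where i: "1 \<le> i" "i \<le> n" "x = int i \<or> x = - int i" using X0sub SC_cases by blast
        then have "cde X0 i = Sg" "g i = x" using x by (auto simp: cde_def g_def)
        then show "x \<in> g ` {i\<in>{1..n}. cde X0 i = Sg}" using i by force
      qed
    qed
    have "num_singles v0 = card {x\<in>X0. - x \<notin> X0}"
      unfolding num_singles_def using card_image[OF i1] im1 by simp
    also have "\<dots> = cP X0 n Sg" unfolding cP_def using card_image[OF i2] im2 by simp
    finally show ?thesis .
  qed
  have mm: "m = cP X0 n Sg" using assms(4) v0 sing by simp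
  have nm: "n - m = 2 * k" using nX0 mm by simp
  have "real (wdim n \<mu>) * (real k + 1) = real ((2 * k) choose k)"
  proof -
    have "int (wdim n \<mu>) * (int k + 1) = int ((2 * k) choose k)"
      using wd cardW cW cat_diag[of k] by simp
    then have "real_of_int (int (wdim n \<mu>) * (int k + 1)) = real_of_int (int ((2 * k) choose k))"
      by simp
    then show ?thesis by simp
  qed
  then have "real (wdim n \<mu>) = 1 / real (k + 1) * real ((2 * k) choose k)"
    by (simp add: field_simps)
  then show ?thesis using nm by blast
qed

end
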